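(* Let $a>0$ and $t>0$, and let $x_{\rm L}(1,t,a)\le x_{\rm R}(1,t,a)$ be the middle and largest of the three real roots of the cubic $x\{4ax^2-(8a^2+20at-t^2)x+4(a-t)^3\}$ (the left and right edges of the support of the three-parametric MP density with $r=1$). (i) If $0<t<a$, then \[ x_{\rm L}(1,t,a)=\frac{1}{8a}\{8a^2+20at-t^2-\sqrt t\,(8a+t)^{3/2}\},\qquad x_{\rm R}(1,t,a)=\frac{1}{8a}\{8a^2+20at-t^2+\sqrt t\,(8a+t)^{3/2}\}, \] and $0<x_{\rm L}(1,t,a)<x_{\rm R}(1,t,a)$. (ii) If $t\ge a$, then $x_{\rm L}(1,t,a)=0$ and \[ x_{\rm R}(1,t,a)=\frac{1}{8a}\{8a^2+20at-t^2+\sqrt t\,(8a+t)^{3/2}\}>0. \]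
   Context: For $r=1$ the cubic $S(x;r,t,a)=4ax^3-\{8a^2+4a(3r+2)t-t^2\}x^2+2[2a^3-2a^2(5r-2)t+a\{r(6r-1)+1\}t^2-(r+1)t^3]x+(r-1)^2t^2\{a^2-a(4r-2)t+t^2\}$ reduces to $x\{4ax^2-(8a^2+20at-t^2)x+4(a-t)^3\}$; the edges $x_{\rm L}(r,t,a)$, $x_{\rm R}(r,t,a)$ of the support are defined as the middle and largest real roots of $S(\cdot;r,t,a)$. *)

theory Defs
  imports Complex_Main
begin

definition S :: "real \<Rightarrow> real \<Rightarrow> real \<Rightarrow> real \<Rightarrow> real" where
  "S x r t a = 4*a*x^3 - (8*a^2 + 4*a*(3*r+2)*t - t^2) * x^2
     + 2*(2*a^3 - 2*a^2*(5*r-2)*t + a*(r*(6*r-1)+1)*t^2 - (r+1)*t^3) * x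
     + (r-1)^2 * t^2 * (a^2 - a*(4*r-2)*t + t^2)"

definition xL :: "real \<Rightarrow> real \<Rightarrow> real \<Rightarrow> real" where
  "xL r t a = (THE x2. \<exists>x1 x3. x1 \<le> x2 \<and> x2 \<le> x3 \<and>
      (\<forall>x. S x r t a = 4*a*(x-x1)*(x-x2)*(x-x3)))"

definition xR :: "real \<Rightarrow> real \<Rightarrow> real \<Rightarrow> real" where
  "xR r t a = (THE x3. \<exists>x1 x2. x1 \<le> x2 \<and> x2 \<le> x3 \<and>
      (\<forall>x. S x r t a = 4*a*(x-x1)*(x-x2)*(x-x3)))"

end

theory Submission
  imports Defs
begin

lemma uniq3:
  fixes a x1 x2 x3 y1 y2 y3 :: real
  assumes a: "a \<noteq> 0" and o: "x1 \<le> x2" "x2 \<le> x3" "y1 \<le> y2" "y2 \<le> y3"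
    and eq: "\<forall>x. 4*a*(x-x1)*(x-x2)*(x-x3) = 4*a*(x-y1)*(x-y2)*(x-y3)"
  shows "x1 = y1 \<and> x2 = y2 \<and> x3 = y3"
proof -
  have e: "(x-x1)*(x-x2)*(x-x3) = (x-y1)*(x-y2)*(x-y3)" for x
    using eq[rule_format, of x] a by (simp add: mult.assoc)
  have "(x1-y1)*(x1-y2)*(x1-y3) = 0" using e[of x1] by simp
  hence h1: "x1 \<ge> y1" using o by (auto simp: mult_eq_0_iff)
  have "(y1-x1)*(y1-x2)*(y1-x3) = 0" using e[of y1] by simp
  hence h2: "y1 \<ge> x1" using o by (auto simp: mult_eq_0_iff)
  have "(x3-y1)*(x3-y2)*(x3-y3) = 0" using e[of x3] by simp
  hence h3: "x3 \<le> y3" using o by (auto simp: mult_eq_0_iff)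
  have "(y3-x1)*(y3-x2)*(y3-x3) = 0" using e[of y3] by simp
  hence h4: "y3 \<le> x3" using o by (auto simp: mult_eq_0_iff)
  have 13: "x1 = y1" "x3 = y3" using h1 h2 h3 h4 by auto
  define z where "z = x1 - 1"
  have "((z-x1)*(z-x3)) * (z-x2) = ((z-x1)*(z-x3)) * (z-y2)"
    using e[of z] 13 by (simp add: algebra_simps)
  moreover have "(z-x1)*(z-x3) \<noteq> 0" using o unfolding z_def by auto
  ultimately have "x2 = y2" by simp
  thus ?thesis using 13 by simp
qed

lemma xL_eq:
  assumes a: "a \<noteq> 0" and o: "p1 \<le> p2" "p2 \<le> p3"
    and f: "\<forall>x. S x r t a = 4*a*(x-p1)*(x-p2)*(x-p3)"
  shows "xL r t a = p2" "xR r t a = p3"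
proof -
  show "xL r t a = p2" unfolding xL_def
  proof (rule the_equality)
    show "\<exists>x1 x3. x1 \<le> p2 \<and> p2 \<le> x3 \<and> (\<forall>x. S x r t a = 4*a*(x-x1)*(x-p2)*(x-x3))"
      using o f by blast
  next
    fix x2 assume "\<exists>x1 x3. x1 \<le> x2 \<and> x2 \<le> x3 \<and> (\<forall>x. S x r t a = 4*a*(x-x1)*(x-x2)*(x-x3))"
    then obtain x1 x3 where h: "x1 \<le> x2" "x2 \<le> x3" "\<forall>x. S x r t a = 4*a*(x-x1)*(x-x2)*(x-x3)" by blast
    show "x2 = p2" using uniq3[OF a h(1,2) o] h(3) f by auto
  qed
  show "xR r t a = p3" unfolding xR_def
  proof (rule the_equality)
    show "\<exists>x1 x2. x1 \<le> x2 \<and> x2 \<le> p3 \<and> (\<forall>x. S x r t a = 4*a*(x-x1)*(x-x2)*(x-p3))"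
      using o f by blast
  next
    fix x3 assume "\<exists>x1 x2. x1 \<le> x2 \<and> x2 \<le> x3 \<and> (\<forall>x. S x r t a = 4*a*(x-x1)*(x-x2)*(x-x3))"
    then obtain x1 x2 where h: "x1 \<le> x2" "x2 \<le> x3" "\<forall>x. S x r t a = 4*a*(x-x1)*(x-x2)*(x-x3)" by blast
    show "x3 = p3" using uniq3[OF a h(1,2) o] h(3) f by auto
  qed
qed

theorem lemma2p5:
  fixes a t :: real
  assumes "a > 0" and "t > 0"
  shows "(t < a \<longrightarrow>
            xL 1 t a = (8*a^2 + 20*a*t - t^2 - sqrt t * (8*a+t) powr (3/2)) / (8*a)
          \<and> xR 1 t a = (8*a^2 + 20*a*t - t^2 + sqrt t * (8*a+t) powr (3/2)) / (8*a)
          \<and> 0 < xL 1 t a \<and> xL 1 t a < xR 1 t a)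
       \<and> (a \<le> t \<longrightarrow>
            xL 1 t a = 0
          \<and> xR 1 t a = (8*a^2 + 20*a*t - t^2 + sqrt t * (8*a+t) powr (3/2)) / (8*a)
          \<and> xR 1 t a > 0)"
proof -
  define B where "B = 8*a^2 + 20*a*t - t^2"
  define D where "D = sqrt t * (8*a+t) powr (3/2)"
  define q1 where "q1 = (B - D) / (8*a)"
  define q2 where "q2 = (B + D) / (8*a)"
  have E: "8*a+t > 0" using assms by simp
  have P2: "((8*a+t) powr (3/2))^2 = (8*a+t)^3"
  proof -
    have "((8*a+t) powr (3/2))^2 = (8*a+t) powr (3/2) * (8*a+t) powr (3/2)"
      by (simp add: power2_eq_square)
    also have "\<dots> = (8*a+t) powr 3" by (simp add: powr_add[symmetric])
    also have "\<dots> = (8*a+t)^3" using E by (simp add: powr_realpow)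
    finally show ?thesis .
  qed
  have D2: "D^2 = t*(8*a+t)^3" unfolding D_def power_mult_distrib P2
    using assms by simp
  have Dpos: "D > 0" unfolding D_def using assms E by simp
  have id: "B^2 - 64*a*(a-t)^3 = t*(8*a+t)^3" unfolding B_def by (simp add: algebra_simps power2_eq_square power3_eq_cube)
  have sum: "q1 + q2 = B/(4*a)" unfolding q1_def q2_def using assms by (simp add: field_simps)
  have prod: "q1 * q2 = (a-t)^3/a"
  proof -
    have "q1*q2 = (B^2 - D^2)/(64*a^2)" unfolding q1_def q2_def
      by (simp add: field_simps power2_eq_square)
    also have "\<dots> = (a-t)^3/a" using D2 id assms by (simp add: field_simps power2_eq_square)
    finally show ?thesis .
  qed
  have fac: "\<forall>x. S x 1 t a = 4*a*(x-q1)*(x-0)*(x-q2)"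
  proof
    fix x
    have "4*a*(x-q1)*(x-0)*(x-q2) = 4*a*x*(x^2 - (q1+q2)*x + q1*q2)"
      by (simp add: algebra_simps power2_eq_square)
    also have "\<dots> = x*(4*a*x^2 - B*x + 4*(a-t)^3)" unfolding sum prod
      using assms by (simp add: field_simps)
    also have "\<dots> = S x 1 t a" unfolding S_def B_def by (simp add: algebra_simps power2_eq_square power3_eq_cube)
    finally show "S x 1 t a = 4*a*(x-q1)*(x-0)*(x-q2)" by simp
  qed
  have fac2: "\<forall>x. S x 1 t a = 4*a*(x-0)*(x-q1)*(x-q2)"
    using fac by (simp add: algebra_simps)
  have q12: "q1 < q2" unfolding q1_def q2_def using Dpos assms by (simp add: divide_strict_right_mono)
  have a0: "a \<noteq> 0" using assms by simp
  note X1 = xL_eq[OF a0 _ _ fac2]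
  note X2 = xL_eq[OF a0 _ _ fac]
  show ?thesis
  proof (intro conjI impI)
    assume ta: "t < a"
    have "t*t < a*t" using ta assms by (simp add: mult_strict_right_mono)
    moreover have "a*t > 0" "a^2 > 0" using assms by simp_all
    ultimately have Bp: "B > 0" unfolding B_def power2_eq_square by linarith
    have pp: "q1 * q2 > 0" unfolding prod using assms ta by simp
    have sp: "q1 + q2 > 0" unfolding sum using Bp assms by simp
    have q1p: "q1 > 0"
    proof (rule ccontr)
      assume "\<not> q1 > 0"
      hence "q1 \<le> 0" "q2 \<ge> 0" using sp by linarith+
      hence "q1 * q2 \<le> 0" by (simp add: mult_nonpos_nonneg)
      thus False using pp by linarith
    qed
    have L1: "xL 1 t a = q1" by (rule X1(1)) (use q1p q12 in auto)
    have L2: "xR 1 t a = q2" by (rule X1(2)) (use q1p q12 in auto)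
    show "xL 1 t a = (8*a^2 + 20*a*t - t^2 - sqrt t * (8*a+t) powr (3/2)) / (8*a)"
      using L1 unfolding q1_def B_def D_def by simp
    show "xR 1 t a = (8*a^2 + 20*a*t - t^2 + sqrt t * (8*a+t) powr (3/2)) / (8*a)"
      using L2 unfolding q2_def B_def D_def by simp
    show "0 < xL 1 t a" using L1 q1p by simp
    show "xL 1 t a < xR 1 t a" using L1 L2 q12 by simp
  next
    assume ta: "a \<le> t"
    have c3: "(a-t)^3 \<le> 0"
    proof -
      have "(a-t)^3 = (a-t)*(a-t)^2" by (simp add: power3_eq_cube power2_eq_square)
      also have "\<dots> \<le> 0" using ta by (simp add: mult_nonpos_nonneg)
      finally show ?thesis .
    qed
    have pp: "q1 * q2 \<le> 0" unfolding prod using assms c3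
      by (simp add: divide_nonpos_pos)
    have "64*a*(a-t)^3 \<le> 0" using assms c3 by (simp add: mult_nonneg_nonpos)
    hence "B^2 \<le> D^2" using D2 id by linarith
    hence "\<bar>B\<bar> \<le> \<bar>D\<bar>" by (simp add: abs_le_square_iff)
    hence DB: "\<bar>B\<bar> \<le> D" using Dpos by simp
    have q2p: "q2 > 0"
    proof (rule ccontr)
      assume "\<not> q2 > 0"
      hence "q1 < 0" "q2 \<le> 0" using q12 by auto
      hence "q1 + q2 < 0" by simp
      hence "B / (4*a) < 0" unfolding sum .
      hence "B < 0" using assms by (simp add: divide_less_0_iff)
      moreover have "(B + D) / (8*a) \<le> 0" using \<open>q2 \<le> 0\<close> unfolding q2_def .
      hence "B + D \<le> 0" using assms by (simp add: divide_le_0_iff)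
      ultimately have Bn: "B < 0" and BD: "B + D \<le> 0" by auto
      have "t \<noteq> a"
      proof
        assume "t = a"
        hence "B = 27*a^2" unfolding B_def by (simp add: power2_eq_square)
        thus False using Bn assms by simp
      qed
      hence "a - t < 0" using ta by simp
      have "(a-t)^2 > 0" using \<open>a - t < 0\<close> by simp
      hence "(a-t)*(a-t)^2 < 0" using \<open>a - t < 0\<close> by (rule mult_neg_pos[rotated])
      hence "(a-t)^3 < 0" by (simp only: power3_eq_cube power2_eq_square mult.assoc)
      hence "64*a*(a-t)^3 < 0" using assms(1) by (simp add: mult_pos_neg)
      hence "B^2 < D^2" using D2 id by linarith
      hence "\<bar>B\<bar>^2 < D^2" by (simp only: power2_abs)
      hence "\<bar>B\<bar> < D" using power2_less_imp_less[of "\<bar>B\<bar>" D] Dpos by simp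
      thus False using Bn BD by linarith
    qed
    have q1n: "q1 \<le> 0"
    proof (rule ccontr)
      assume "\<not> q1 \<le> 0"
      hence "q1 * q2 > 0" using q2p by simp
      thus False using pp by linarith
    qed
    have L1: "xL 1 t a = 0" by (rule X2(1)) (use q1n q2p in auto)
    have L2: "xR 1 t a = q2" by (rule X2(2)) (use q1n q2p in auto)
    show "xL 1 t a = 0" using L1 by simp
    show "xR 1 t a = (8*a^2 + 20*a*t - t^2 + sqrt t * (8*a+t) powr (3/2)) / (8*a)"
      using L2 unfolding q2_def B_def D_def by simp
    show "xR 1 t a > 0" using L2 q2p by simp
  qed
qed

end
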